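(* Let $f:\mathbb{R}^d\to\mathbb{R}^d$ be a diffeomorphism. Let $\mathcal{C}$ denote the set of non-empty compact subsets of $\mathbb{R}^d$, let $d:\mathcal{C}\times\mathcal{C}\to[0,\infty)$ be any metric on $\mathcal{C}$, and define $E:\mathcal{C}\to[0,\infty)$ by $E(X)=d(X,f(X))$. For $r>0$ let $B_r(0)$ be the ball of radius $r$ centered at $0$, and for a compact set $Q\subset\mathbb{R}^d$ let $\mathrm{Inv}(Q)=\{x\in Q \mid f^k(x)\in Q \text{ for all } k\in\mathbb{Z}\}$ be the maximal invariant set in $Q$. Suppose that there is $S\in\mathcal{C}$ such that $\mathrm{Inv}(B_r(0))=S$ for all sufficiently large $r$. Then $S$ is the unique minimizer of $E$ on $\mathcal{C}$ which is maximal with respect to the partial order given by set inclusion $\subseteq$.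
   Context: A set $X\subset\mathbb{R}^d$ is called invariant if $X=f(X)$. Since $d$ is a metric, $E(X)=0$ if and only if $X$ is invariant. *)

theory Defs
  imports "HOL-Analysis.Analysis"
begin

definition C1_map :: "('a::euclidean_space \<Rightarrow> 'a) \<Rightarrow> bool" where
  "C1_map f \<longleftrightarrow> (\<exists>f'::'a \<Rightarrow> ('a \<Rightarrow>\<^sub>L 'a).
      (\<forall>x. (f has_derivative blinfun_apply (f' x)) (at x)) \<and> continuous_on UNIV f')"

definition diffeomorphism :: "('a::euclidean_space \<Rightarrow> 'a) \<Rightarrow> bool" where
  "diffeomorphism f \<longleftrightarrow> bij f \<and> C1_map f \<and> C1_map (inv f)"

definition fpow :: "('a \<Rightarrow> 'a) \<Rightarrow> int \<Rightarrow> 'a \<Rightarrow> 'a" where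
  "fpow f k = (if 0 \<le> k then f ^^ nat k else inv f ^^ nat (- k))"

definition Inv :: "('a \<Rightarrow> 'a) \<Rightarrow> 'a set \<Rightarrow> 'a set" where
  "Inv f Q = {x \<in> Q. \<forall>k::int. fpow f k x \<in> Q}"

definition Cpt :: "'a::topological_space set set" where
  "Cpt = {X. X \<noteq> {} \<and> compact X}"

definition metric_on :: "'b set \<Rightarrow> ('b \<Rightarrow> 'b \<Rightarrow> real) \<Rightarrow> bool" where
  "metric_on M D \<longleftrightarrow>
     (\<forall>x\<in>M. \<forall>y\<in>M. 0 \<le> D x y \<and> (D x y = 0 \<longleftrightarrow> x = y) \<and> D x y = D y x) \<and>
     (\<forall>x\<in>M. \<forall>y\<in>M. \<forall>z\<in>M. D x z \<le> D x y + D y z)"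

definition energy :: "('a set \<Rightarrow> 'a set \<Rightarrow> real) \<Rightarrow> ('a \<Rightarrow> 'a) \<Rightarrow> 'a set \<Rightarrow> real" where
  "energy D f X = D X (f ` X)"

definition is_minimizer :: "('a::topological_space set \<Rightarrow> real) \<Rightarrow> 'a set \<Rightarrow> bool" where
  "is_minimizer E X \<longleftrightarrow> X \<in> Cpt \<and> (\<forall>Y\<in>Cpt. E X \<le> E Y)"

definition is_maximal_minimizer :: "('a::topological_space set \<Rightarrow> real) \<Rightarrow> 'a set \<Rightarrow> bool" where
  "is_maximal_minimizer E X \<longleftrightarrow> is_minimizer E X \<and>
     (\<forall>Y. is_minimizer E Y \<and> X \<subseteq> Y \<longrightarrow> Y = X)"

end

theory Submission
  imports Defs
begin

lemma fpow_shift: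
  assumes "bij f"
  shows "fpow f k (f x) = fpow f (k+1) x"
proof (cases "0 \<le> k")
  case True
  then have "nat (k+1) = Suc (nat k)" by simp
  then show ?thesis using True by (simp add: fpow_def funpow_Suc_right del: funpow.simps)
next
  case False
  define m where "m = nat (-(k+1))"
  have m: "nat (-k) = Suc m" "nat (-(k+1)) = m" using False unfolding m_def by auto
  have ix: "inv f (f x) = x" using assms by (simp add: bij_is_inj)
  show ?thesis
  proof (cases "k + 1 = 0")
    case True
    then have "m = 0" using m by simp
    then show ?thesis using False True m ix by (simp add: fpow_def)
  next
    case F2: False
    then have "\<not> 0 \<le> k + 1" using False by simp
    then show ?thesis using False m ix by (simp add: fpow_def funpow_Suc_right del: funpow.simps)
  qed
qed

lemma funpow_mem:
  assumes "g ` Y \<subseteq> Y" "x \<in> Y" shows "(g ^^ n) x \<in> Y"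
  using assms by (induction n) auto

lemma invariant_sub:
  assumes "bij f" "f ` Y = Y" "Y \<subseteq> Q"
  shows "Y \<subseteq> Inv f Q"
proof
  fix x assume x: "x \<in> Y"
  have i: "inv f ` Y = Y" using assms
    by (metis bij_is_inj image_inv_f_f)
  have "\<forall>k. fpow f k x \<in> Y"
    unfolding fpow_def using funpow_mem[of f Y x] funpow_mem[of "inv f" Y x] x assms(2) i
    by auto
  then show "x \<in> Inv f Q" unfolding Inv_def using assms(3) x by auto
qed

lemma Inv_invariant:
  assumes "bij f" shows "f ` Inv f Q = Inv f Q"
proof
  show "f ` Inv f Q \<subseteq> Inv f Q"
  proof
    fix y assume "y \<in> f ` Inv f Q"
    then obtain x where x: "x \<in> Inv f Q" "y = f x" by auto
    have "\<forall>k. fpow f k y \<in> Q" using x fpow_shift[OF assms] unfolding Inv_def by auto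
    moreover have "y \<in> Q" using spec[OF calculation, of 0] by (simp add: fpow_def)
    ultimately show "y \<in> Inv f Q" unfolding Inv_def by blast
  qed
next
  show "Inv f Q \<subseteq> f ` Inv f Q"
  proof
    fix x assume x: "x \<in> Inv f Q"
    define y where "y = inv f x"
    have fy: "f y = x" unfolding y_def using assms by (simp add: bij_is_surj surj_f_inv_f)
    have "\<forall>k. fpow f k y \<in> Q"
    proof
      fix k
      have "fpow f k y = fpow f (k - 1) (f y)" using fpow_shift[OF assms, of "k-1" y] by simp
      then show "fpow f k y \<in> Q" using x fy unfolding Inv_def by auto
    qed
    moreover have "y \<in> Q" using spec[OF calculation, of 0] by (simp add: fpow_def)
    ultimately have "y \<in> Inv f Q" unfolding Inv_def by blast
    then show "x \<in> f ` Inv f Q" using fy by blast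
  qed
qed

theorem mainTheorem1:
  fixes f :: "'a::euclidean_space \<Rightarrow> 'a"
    and D :: "'a set \<Rightarrow> 'a set \<Rightarrow> real"
    and S :: "'a set"
  assumes "diffeomorphism f"
    and "metric_on Cpt D"
    and "S \<in> Cpt"
    and "\<exists>R. \<forall>r\<ge>R. r > 0 \<longrightarrow> Inv f (cball 0 r) = S"
  shows "is_maximal_minimizer (energy D f) S \<and>
         (\<forall>T. is_maximal_minimizer (energy D f) T \<longrightarrow> T = S)"
proof -
  have bij: "bij f" using assms(1) unfolding diffeomorphism_def by simp
  have cont: "continuous_on UNIV f"
  proof -
    obtain f' where "\<forall>x. (f has_derivative blinfun_apply (f' x)) (at x)"
      using assms(1) unfolding diffeomorphism_def C1_map_def by blast
    then show ?thesis
      by (meson continuous_at_imp_continuous_on has_derivative_continuous)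
  qed
  have imC: "f ` Y \<in> Cpt" if "Y \<in> Cpt" for Y
    using that cont unfolding Cpt_def
    by (auto intro: compact_continuous_image continuous_on_subset)
  obtain R where R: "\<And>r. r \<ge> R \<Longrightarrow> r > 0 \<Longrightarrow> Inv f (cball 0 r) = S" using assms(4) by blast
  define r0 where "r0 = max R 1"
  have SI: "S = Inv f (cball 0 r0)" using R[of r0] unfolding r0_def by simp
  have fS: "f ` S = S" using SI Inv_invariant[OF bij] by simp
  have E0: "energy D f Y = 0 \<longleftrightarrow> f ` Y = Y" if "Y \<in> Cpt" for Y
  proof -
    have "D Y (f ` Y) = 0 \<longleftrightarrow> Y = f ` Y"
      using assms(2) that imC[OF that] unfolding metric_on_def by blast
    then show ?thesis unfolding energy_def by auto
  qed
  have Epos: "energy D f Y \<ge> 0" if "Y \<in> Cpt" for Y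
  proof -
    have "D Y (f ` Y) \<ge> 0"
      using assms(2) that imC[OF that] unfolding metric_on_def by blast
    then show ?thesis unfolding energy_def by auto
  qed
  have maxinv: "Y \<subseteq> S" if "Y \<in> Cpt" "f ` Y = Y" for Y
  proof -
    have "bounded Y" using that unfolding Cpt_def by (simp add: compact_imp_bounded)
    then obtain b where b: "Y \<subseteq> cball 0 b" unfolding bounded_pos by (auto simp: subset_iff)
    define r where "r = max b r0"
    have "Y \<subseteq> cball 0 r" using b unfolding r_def by auto
    then have "Y \<subseteq> Inv f (cball 0 r)" using invariant_sub[OF bij that(2)] by simp
    moreover have "Inv f (cball 0 r) = S" using R[of r] unfolding r_def r0_def by simp
    ultimately show ?thesis by simp
  qed
  have minS: "is_minimizer (energy D f) S"
    unfolding is_minimizer_def using assms(3) E0[OF assms(3)] fS Epos by simp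
  have minY: "Y \<subseteq> S" if "is_minimizer (energy D f) Y" for Y
  proof -
    have Y: "Y \<in> Cpt" "energy D f Y \<le> energy D f S"
      using that assms(3) unfolding is_minimizer_def by auto
    then have "energy D f Y = 0" using E0[OF assms(3)] fS Epos[OF Y(1)] by simp
    then show ?thesis using maxinv Y(1) E0[OF Y(1)] by simp
  qed
  have mm: "is_maximal_minimizer (energy D f) S"
    unfolding is_maximal_minimizer_def using minS minY by auto
  show ?thesis
    using mm minS minY unfolding is_maximal_minimizer_def by blast
qed

end
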